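(* Let $\mathbb{F}_q$ be a finite field with $4 \mid q-1$, and let $f \in \mathbb{F}_q[x]$ be irreducible of even degree $d$, so that $\mathbb{F}_{q^d} = \mathbb{F}_q[x]/\langle f\rangle$. Then the formal derivative $f'$ (taken modulo $f$) is a quadratic nonresidue in $\mathbb{F}_q[x]/\langle f\rangle$.
   Context: An element $a$ of a finite field $F$ is a quadratic nonresidue if $x^2=a$ has no solution in $F$. *)

theory Defs
  imports "HOL-Computational_Algebra.Computational_Algebra"
begin

definition quad_nonresidue_mod :: "'a::field poly \<Rightarrow> 'a poly \<Rightarrow> bool" where
  "quad_nonresidue_mod f a \<longleftrightarrow> \<not> (\<exists>x. (x ^ 2) mod f = a mod f)"

end

theory Submission
  imports Defs "HOL-Number_Theory.Cong"
begin


lemma char_prime_ff: "prime CHAR('a::{field,finite})"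
  using finite_imp_CHAR_pos[where ?'a='a] prime_CHAR_semidom[where ?'a='a] by auto

lemma of_nat_inv_ff:
  assumes "\<not> CHAR('a::{field,finite}) dvd k"
  shows "\<exists>k'. of_nat k' * (of_nat k :: 'a) = 1"
proof -
  have "coprime k CHAR('a)" using assms char_prime_ff
    by (metis coprime_commute prime_imp_coprime)
  then obtain x where "[k * x = Suc 0] (mod CHAR('a))" using cong_solve_coprime_nat by blast
  hence "(of_nat (k*x) :: 'a) = of_nat (Suc 0)"
    using of_nat_eq_iff_cong_CHAR by blast
  thus ?thesis by (intro exI[of _ x]) (simp add: mult.commute)
qed


definition addgrp :: "'a::ring_1 set \<Rightarrow> bool" where
  "addgrp S \<longleftrightarrow> 0 \<in> S \<and> (\<forall>a\<in>S. \<forall>b\<in>S. a + b \<in> S)"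

lemma addgrp_nat: "addgrp S \<Longrightarrow> a \<in> S \<Longrightarrow> of_nat k * a \<in> S"
  by (induction k) (auto simp: addgrp_def distrib_right)

lemma addgrp_uminus:
  assumes "addgrp S" "a \<in> S" shows "- (a::'a::{field,finite}) \<in> S"
proof -
  have "of_nat (CHAR('a) - 1) * a \<in> S" using assms addgrp_nat by blast
  moreover have "of_nat (CHAR('a) - 1) = (-1::'a)"
  proof -
    have "CHAR('a) \<ge> 1" using char_prime_ff[where ?'a='a] prime_ge_1_nat by blast
    hence "of_nat (CHAR('a) - 1) + (1::'a) = of_nat CHAR('a)" 
      by (metis le_add_diff_inverse2 of_nat_Suc Suc_eq_plus1 add.commute)
    thus ?thesis by (simp add: eq_neg_iff_add_eq_0)
  qed
  ultimately show ?thesis by simp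
qed

lemma card_ff_prime_power_aux:
  assumes "addgrp (S::'a::{field,finite} set)" "card S = CHAR('a) ^ a"
  shows "\<exists>n. card (UNIV::'a set) = CHAR('a) ^ n"
  using assms
proof (induction "card (UNIV::'a set) - card S" arbitrary: S a rule: less_induct)
  case less
  define p where "p = CHAR('a)"
  have pp: "prime p" unfolding p_def by (rule char_prime_ff)
  show ?case
  proof (cases "S = UNIV")
    case True thus ?thesis using less by auto
  next
    case False
    then obtain v where v: "v \<notin> S" by auto
    define S' where "S' = (\<lambda>(s,i). s + of_nat i * v) ` (S \<times> {..<p})"
    have inj: "inj_on (\<lambda>(s,i). s + of_nat i * v) (S \<times> {..<p})"
    proof (rule inj_onI, clarify)
      fix s i s' i' assume h: "s \<in> S" "i < p" "s' \<in> S" "i' < p" "s + of_nat i * v = s' + of_nat i' * v"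
      show "s = s' \<and> i = i'"
      proof (rule ccontr)
        assume ne: "\<not> (s = s' \<and> i = i')"
        have "i \<noteq> i'" using ne h(5) by auto
        have main: "\<And>s s' i i'. s \<in> S \<Longrightarrow> s' \<in> S \<Longrightarrow> i < p \<Longrightarrow> i' < p \<Longrightarrow> i < i' \<Longrightarrow>
           s + of_nat i * v = s' + of_nat i' * v \<Longrightarrow> False"
        proof -
          fix s s' i i' assume h: "s \<in> S" "s' \<in> S" "i < p" "i' < p" "i < i'"
            "s + of_nat i * v = s' + of_nat i' * v"
          have "s + - s' = of_nat (i' - i) * v" using h(5,6)
            by (simp add: of_nat_diff algebra_simps)
          moreover have "s + - s' \<in> S" using less(2) h addgrp_uminus unfolding addgrp_def by blast
          moreover have "\<not> p dvd (i' - i)" using h(4,5) by (simp add: nat_dvd_not_less)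
          then obtain k' where k': "of_nat k' * (of_nat (i'-i) :: 'a) = 1"
            using of_nat_inv_ff unfolding p_def by blast
          ultimately have "of_nat k' * (of_nat (i' - i) * v) \<in> S" using less(2) addgrp_nat by metis
          hence "v \<in> S" using k' by (simp flip: mult.assoc)
          thus False using v by blast
        qed
        show False
        proof (cases "i < i'")
          case True thus ?thesis using main h by blast
        next
          case False thus ?thesis using main[of s' s i' i] h \<open>i \<noteq> i'\<close> by auto
        qed
      qed
    qed
    have cardS': "card S' = p ^ Suc a"
      unfolding S'_def using card_image[OF inj] less(3) by (simp add: card_cartesian_product p_def)
    have grp: "addgrp S'"
      unfolding addgrp_def
    proof safe
      have "(0::nat) < p" using pp prime_gt_0_nat by blast
      moreover have "(0::'a) \<in> S" using less(2) by (simp add: addgrp_def)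
      ultimately show "0 \<in> S'" unfolding S'_def by (force simp: image_iff)
    next
      fix x y assume "x \<in> S'" "y \<in> S'"
      then obtain s i s' i' where xy: "s \<in> S" "s' \<in> S" "i < p" "i' < p"
        "x = s + of_nat i * v" "y = s' + of_nat i' * v" unfolding S'_def by auto
      have "x + y = (s + s') + of_nat ((i + i') mod p) * v"
      proof -
        have "(of_nat ((i + i') mod p) :: 'a) = of_nat (i + i')"
          unfolding p_def by (subst of_nat_eq_iff_cong_CHAR) (simp add: cong_def)
        thus ?thesis using xy by (simp add: algebra_simps)
      qed
      moreover have "s + s' \<in> S" using less(2) xy unfolding addgrp_def by blast
      moreover have "(i + i') mod p < p" using pp prime_gt_0_nat by auto
      ultimately show "x + y \<in> S'" unfolding S'_def by force
    qed
    have "card S \<ge> 1" using less(2) unfolding addgrp_def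
      by (metis One_nat_def Suc_leI card_gt_0_iff empty_iff finite)
    moreover have "p > 1" using pp prime_gt_1_nat by blast
    ultimately have "card S' > card S" using cardS' less(3) p_def by simp
    moreover have "card S' \<le> card (UNIV::'a set)" by (simp add: card_mono)
    ultimately have "card (UNIV::'a set) - card S' < card (UNIV::'a set) - card S" by linarith
    thus ?thesis using less(1) grp cardS' p_def by blast
  qed
qed

lemma card_ff_prime_power: "\<exists>n. card (UNIV::'a::{field,finite} set) = CHAR('a) ^ n"
  by (rule card_ff_prime_power_aux[of "{0}" 0]) (auto simp: addgrp_def)


lemma ff_pow_card: "(x::'a::{field,finite}) ^ card (UNIV::'a set) = x"
proof (cases "x = 0")
  case False
  have "x * (\<Prod>y\<in>UNIV-{0}. x * y) = x * x ^ (card (UNIV :: 'a set) - 1) * \<Prod>(UNIV-{0})"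
    by (simp add: prod.distrib mult_ac)
  also have "x * x ^ (card (UNIV :: 'a set) - 1) = x ^ Suc (card (UNIV :: 'a set) - 1)"
    by (subst power_Suc) auto
  also have "Suc (card (UNIV :: 'a set) - 1) = card (UNIV :: 'a set)"
    using finite_UNIV_card_ge_0[where ?'a = 'a] by simp
  also have "(\<Prod>y\<in>UNIV-{0}. x * y) = (\<Prod>y\<in>UNIV-{0}. y)"
    by (rule prod.reindex_bij_witness[of _ "\<lambda>y. y / x" "\<lambda>y. x * y"]) (use False in auto)
  finally show ?thesis
    by simp
qed (use finite_UNIV_card_ge_0[where ?'a = 'a] in auto)

lemma ff_pow_card_pow: "(x::'a::{field,finite}) ^ (card (UNIV::'a set) ^ k) = x"
  by (induction k) (simp_all add: ff_pow_card power_mult)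

lemma frob_add: "((u::'a::{field,finite} poly) + v) ^ (card (UNIV::'a set) ^ k) =
   u ^ (card (UNIV::'a set) ^ k) + v ^ (card (UNIV::'a set) ^ k)"
proof -
  obtain n where n: "card (UNIV::'a set) = CHAR('a) ^ n" using card_ff_prime_power by blast
  have "prime CHAR('a poly)" using char_prime_ff[where ?'a='a] by simp
  moreover have "card (UNIV::'a set) ^ k = CHAR('a poly) ^ (n * k)" by (simp add: n power_mult)
  ultimately show ?thesis by (rule freshmans_dream')
qed

lemma frob_diff: "((u::'a::{field,finite} poly) - v) ^ (card (UNIV::'a set) ^ k) =
   u ^ (card (UNIV::'a set) ^ k) - v ^ (card (UNIV::'a set) ^ k)"
  using frob_add[of "u - v" v k] by (simp add: algebra_simps)

lemma frob_const: "[:a::'a::{field,finite}:] ^ (card (UNIV::'a set) ^ k) = [:a:]"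
  by (simp add: poly_const_pow ff_pow_card_pow)

definition lift :: "'a::comm_ring_1 poly \<Rightarrow> 'a poly poly" where
  "lift g = map_poly (\<lambda>a. [:a:]) g"

lemma lift_pCons [simp]: "lift (pCons a g) = pCons [:a:] (lift g)"
  by (simp add: lift_def map_poly_pCons)

lemma lift_0 [simp]: "lift 0 = 0" by (simp add: lift_def)

lemma poly_lift_x: "poly (lift g) [:0,1:] = g"
  by (induction g) simp_all

lemma coeff_lift: "coeff (lift g) n = [:coeff g n:]"
  by (simp add: lift_def coeff_map_poly)

lemma pderiv_lift: "pderiv (lift g) = lift (pderiv g)"
  by (rule poly_eqI) (simp add: coeff_pderiv coeff_lift of_nat_poly)

lemma degree_lift: "degree (lift g) = degree g"
  by (simp add: lift_def degree_map_poly)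

lemma poly_lift_frob: "(poly (lift (g::'a::{field,finite} poly)) y) ^ (card (UNIV::'a set) ^ k) =
   poly (lift g) (y ^ (card (UNIV::'a set) ^ k))"
  by (induction g) (simp_all add: frob_add frob_const power_mult_distrib finite_UNIV_card_ge_0)



lemma alg_shift:
  fixes A :: "nat \<Rightarrow> 'b::comm_ring_1"
  assumes per: "\<And>i. A i = A (i mod d)" and "odd (d - 1)" "d > 0"
  shows "(\<Prod>j<d. \<Prod>i<j. A (Suc i) - A (Suc j)) = - (\<Prod>j<d. \<Prod>i<j. A i - A j)"
proof -
  obtain n where dn: "d = Suc n" using assms(3) by (cases d) auto
  have on: "odd n" using assms(2) dn by simp
  have "(\<Prod>j<d. \<Prod>i<j. A (Suc i) - A (Suc j)) =
        (\<Prod>j<n. \<Prod>i<j. A (Suc i) - A (Suc j)) * (\<Prod>i<n. A (Suc i) - A (Suc n))"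
    unfolding dn by simp
  also have "A (Suc n) = A 0" using per[of "Suc n"] dn by simp
  also have "(\<Prod>i<n. A (Suc i) - A 0) = (\<Prod>i<n. (-1) * (A 0 - A (Suc i)))"
    by (intro prod.cong) auto
  also have "\<dots> = (-1) ^ n * (\<Prod>i<n. A 0 - A (Suc i))"
    by (subst prod.distrib) simp
  also have "(-1::'b) ^ n = -1" using on by simp
  finally have l: "(\<Prod>j<d. \<Prod>i<j. A (Suc i) - A (Suc j)) =
      (\<Prod>j<n. \<Prod>i<j. A (Suc i) - A (Suc j)) * (- 1 * (\<Prod>i<n. A 0 - A (Suc i)))" .
  have r: "(\<Prod>j<d. \<Prod>i<j. A i - A j) =
       (\<Prod>j<n. A 0 - A (Suc j)) * (\<Prod>j<n. \<Prod>i<j. A (Suc i) - A (Suc j))"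
    unfolding dn prod.lessThan_Suc_shift by (simp add: prod.lessThan_Suc_shift prod.distrib)
  show ?thesis unfolding l r by (simp add: algebra_simps)
qed

lemma alg_offdiag:
  fixes g :: "nat \<Rightarrow> nat \<Rightarrow> 'b::comm_monoid_mult"
  shows "(\<Prod>k<d. \<Prod>j\<in>{..<d}-{k}. g k j) = (\<Prod>j<d. \<Prod>i<j. g i j * g j i)"
proof -
  have split: "{..<d} - {k} = {..<k} \<union> {k<..<d}" if "k < d" for k
    using that by auto
  have "(\<Prod>k<d. \<Prod>j\<in>{..<d}-{k}. g k j) = (\<Prod>k<d. (\<Prod>j<k. g k j) * (\<Prod>j\<in>{k<..<d}. g k j))"
    by (intro prod.cong refl, subst split) (auto intro: prod.union_disjoint)
  also have "\<dots> = (\<Prod>k<d. \<Prod>j<k. g k j) * (\<Prod>k<d. \<Prod>j\<in>{k<..<d}. g k j)"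
    by (simp add: prod.distrib)
  also have "(\<Prod>k<d. \<Prod>j\<in>{k<..<d}. g k j) = (\<Prod>k\<in>{..<d}. \<Prod>j\<in>{j\<in>{..<d}. k < j}. g k j)"
    by (intro prod.cong refl) auto
  also have "\<dots> = (\<Prod>j\<in>{..<d}. \<Prod>k\<in>{k\<in>{..<d}. k < j}. g k j)"
    by (rule prod.swap_restrict) auto
  also have "\<dots> = (\<Prod>j<d. \<Prod>k<j. g k j)"
    by (intro prod.cong refl) auto
  finally show ?thesis by (simp add: prod.distrib mult.commute)
qed

lemma alg_rot:
  fixes A :: "nat \<Rightarrow> 'b::comm_monoid_mult" and g :: "nat \<Rightarrow> nat \<Rightarrow> 'b"
  assumes per: "\<And>k i. g k i = g k (i mod d)" and "k < d"
  shows "(\<Prod>i\<in>{1..<d}. g k (i + k)) = (\<Prod>j\<in>{..<d}-{k}. g k j)"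
proof (rule prod.reindex_bij_witness[of _ "\<lambda>j. (j + d - k) mod d" "\<lambda>i. (i + k) mod d"])
  fix i assume i: "i \<in> {1..<d}"
  show "(i + k) mod d \<in> {..<d} - {k}" using i assms(2) by (cases "i + k < d") (auto simp: mod_if)
  show "((i + k) mod d + d - k) mod d = i" using i assms(2) by (cases "i + k < d") (auto simp: mod_if)
  show "g k ((i + k) mod d) = g k (i + k)" using per by metis
next
  fix j assume j: "j \<in> {..<d} - {k}"
  show "(j + d - k) mod d \<in> {1..<d}" using j assms(2) by (cases "j < k") (auto simp: mod_if)
  show "((j + d - k) mod d + k) mod d = j" using j assms(2) by (cases "j < k") (auto simp: mod_if)
qed



lemma prime_dvd_prod_iff:
  assumes "prime_elem (p::'a::comm_semiring_1)" "finite A"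
  shows "p dvd (\<Prod>x\<in>A. g x) \<longleftrightarrow> (\<exists>x\<in>A. p dvd g x)"
  using assms(2)
proof (induction A rule: finite_induct)
  case empty thus ?case using assms(1) prime_elem_not_unit by auto
next
  case (insert x A) thus ?case using assms(1) by (simp add: prime_elem_dvd_mult_iff)
qed

definition al :: "nat \<Rightarrow> 'a::{field,finite} poly" where
  "al j = [:0,1:] ^ (card (UNIV::'a set) ^ j)"

lemma al_0: "al 0 = [:0,1:]" by (simp add: al_def)

lemma al_pow: "(al i :: 'a::{field,finite} poly) ^ (card (UNIV::'a set) ^ k) = al (i + k)"
  by (simp add: al_def power_mult[symmetric] power_add)

context
  fixes f :: "'a::{field,finite} poly"
  assumes irr: "irreducible f"
begin

lemma pf: "prime_elem f" using irr by (rule field_poly_irreducible_imp_prime)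

lemma f_nz: "f \<noteq> 0" using irr by auto

lemma degf: "degree f > 0"
  using irr f_nz is_unit_iff_degree irreducible_not_unit by (metis neq0_conv)

lemma small_dvd: "degree g < degree f \<Longrightarrow> f dvd g \<Longrightarrow> g = 0"
  using dvd_imp_degree_le by (metis not_le)

definition Rs :: "'a poly set" where "Rs = {g. degree g < degree f}"

lemma card_Rs: "card Rs = card (UNIV::'a set) ^ degree f"
proof -
  let ?d = "degree f"
  let ?L = "{xs. set xs \<subseteq> (UNIV::'a set) \<and> length xs = ?d}"
  have "bij_betw Poly ?L Rs"
  proof (rule bij_betw_imageI)
    show "inj_on Poly ?L"
    proof (rule inj_onI)
      fix xs ys assume h: "xs \<in> ?L" "ys \<in> ?L" "Poly xs = Poly ys"
      hence "\<forall>i. nth_default 0 xs i = nth_default 0 ys i" by (metis coeff_Poly_eq)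
      show "xs = ys"
      proof (rule nth_equalityI)
        show "length xs = length ys" using h(1,2) by simp
        fix i assume "i < length xs"
        thus "xs ! i = ys ! i" using h(1,2) \<open>\<forall>i. _\<close>[rule_format, of i]
          by (simp add: nth_default_nth)
      qed
    qed
    show "Poly ` ?L = Rs"
    proof
      show "Poly ` ?L \<subseteq> Rs"
      proof
        fix g assume "g \<in> Poly ` ?L"
        then obtain xs where xs: "length xs = ?d" "g = Poly xs" by auto
        have "degree g \<le> ?d - 1"
        proof (rule degree_le, intro allI impI)
          fix i assume "?d - 1 < i"
          hence "i \<ge> length xs" using xs degf by simp
          thus "coeff g i = 0" using xs by (simp add: nth_default_def)
        qed
        thus "g \<in> Rs" unfolding Rs_def using degf by simp
      qed
    next
      show "Rs \<subseteq> Poly ` ?L"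
      proof
        fix g assume g: "g \<in> Rs"
        have "Poly (map (coeff g) [0..<?d]) = g"
        proof (rule poly_eqI)
          fix n show "coeff (Poly (map (coeff g) [0..<?d])) n = coeff g n"
          proof (cases "n < ?d")
            case False thus ?thesis using g unfolding Rs_def by (simp add: nth_default_def coeff_eq_0)
          qed (simp add: nth_default_def)
        qed
        thus "g \<in> Poly ` ?L" by (intro image_eqI[of _ _ "map (coeff g) [0..<?d]"]) auto
      qed
    qed
  qed
  hence "card Rs = card ?L" by (simp add: bij_betw_same_card)
  thus ?thesis using card_lists_length_eq[of "UNIV::'a set" "degree f"] by simp
qed

lemma finite_Rs: "finite Rs"
proof -
  have "card Rs > 0" using finite_UNIV_card_ge_0[where ?'a='a] by (simp add: card_Rs)
  thus ?thesis by (rule card_ge_0_finite)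
qed


lemma zero_Rs: "0 \<in> Rs" using degf by (simp add: Rs_def)

lemma fermat_K1:
  assumes y: "\<not> f dvd y"
  shows "f dvd y ^ (card (UNIV::'a set) ^ degree f - 1) - 1"
proof -
  define R' where "R' = Rs - {0}"
  define h where "h r = (y * r) mod f" for r
  have fin: "finite R'" using finite_Rs by (simp add: R'_def)
  have nd: "\<not> f dvd r" if "r \<in> R'" for r
    using that small_dvd unfolding R'_def Rs_def by blast
  have sub: "h ` R' \<subseteq> R'"
  proof
    fix z assume "z \<in> h ` R'"
    then obtain r where r: "r \<in> R'" "z = h r" by auto
    have "\<not> f dvd y * r" using nd[OF r(1)] y pf by (simp add: prime_elem_dvd_mult_iff)
    hence "z \<noteq> 0" using r(2) unfolding h_def by (simp add: mod_eq_0_iff_dvd)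
    moreover have "degree z < degree f" using degree_mod_less'[OF f_nz] \<open>z \<noteq> 0\<close> r(2) h_def by auto
    ultimately show "z \<in> R'" unfolding R'_def Rs_def by auto
  qed
  have inj: "inj_on h R'"
  proof (rule inj_onI)
    fix r r' assume rr: "r \<in> R'" "r' \<in> R'" "h r = h r'"
    hence "f dvd y * r - y * r'" unfolding h_def by (simp add: mod_eq_dvd_iff)
    hence "f dvd y * (r - r')" by (simp add: algebra_simps)
    hence "f dvd r - r'" using y pf by (simp add: prime_elem_dvd_mult_iff)
    moreover have "degree (r - r') < degree f" using rr(1,2) unfolding R'_def Rs_def
      by (simp add: degree_diff_less)
    ultimately show "r = r'" using small_dvd by (metis eq_iff_diff_eq_0)
  qed
  have img: "h ` R' = R'" using endo_inj_surj[OF fin sub inj] .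
  have "prod id R' = prod id (h ` R')" using img by simp
  also have "\<dots> = prod h R'" using prod.reindex[OF inj, of id] by simp
  finally have e1: "prod id R' = prod h R'" .
  have "[prod h R' = (\<Prod>r\<in>R'. y * r)] (mod f)"
    by (rule cong_prod) (simp add: h_def)
  also have "(\<Prod>r\<in>R'. y * r) = y ^ card R' * prod id R'"
    by (simp add: prod.distrib)
  finally have "[1 * prod id R' = y ^ card R' * prod id R'] (mod f)" using e1 by simp
  hence "f dvd (y ^ card R' - 1) * prod id R'"
    by (simp add: cong_iff_dvd_diff algebra_simps dvd_diff_commute)
  moreover have "\<not> f dvd prod id R'" using nd pf fin by (simp add: prime_dvd_prod_iff)
  ultimately have "f dvd y ^ card R' - 1" using pf by (simp add: prime_elem_dvd_mult_iff)
  moreover have "card R' = card (UNIV::'a set) ^ degree f - 1"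
    unfolding R'_def using zero_Rs finite_Rs by (simp add: card_Rs)
  ultimately show ?thesis by simp
qed

lemma fermat_K: "f dvd y ^ (card (UNIV::'a set) ^ degree f) - y"
proof (cases "f dvd y")
  case True
  have "card (UNIV::'a set) ^ degree f > 0" using finite_UNIV_card_ge_0[where ?'a='a] by simp
  hence "y dvd y ^ (card (UNIV::'a set) ^ degree f)" by (simp add: dvd_power)
  thus ?thesis using True by (meson dvd_diff dvd_trans)
next
  case False
  have "card (UNIV::'a set) ^ degree f > 0" using finite_UNIV_card_ge_0[where ?'a='a] by simp
  hence "y ^ (card (UNIV::'a set) ^ degree f) - y = y * (y ^ (card (UNIV::'a set) ^ degree f - 1) - 1)"
    by (simp add: algebra_simps power_Suc[symmetric] del: power_Suc)
  thus ?thesis using fermat_K1[OF False] by simp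
qed


lemma factor_roots:
  fixes P :: "'a poly poly" and a :: "nat \<Rightarrow> 'a poly"
  assumes "\<forall>i<n. f dvd poly P (a i)"
    and "\<forall>i<n. \<forall>j<n. i \<noteq> j \<longrightarrow> \<not> f dvd (a i - a j)"
  shows "\<exists>Q E. P = (\<Prod>i<n. [:- a i, 1:]) * Q + smult f E \<and> degree Q = degree P - n"
  using assms
proof (induction n)
  case 0
  show ?case by (intro exI[of _ P] exI[of _ 0]) simp
next
  case (Suc n)
  from Suc.prems have r: "\<forall>i<n. f dvd poly P (a i)" and d: "\<forall>i<n. \<forall>j<n. i \<noteq> j \<longrightarrow> \<not> f dvd (a i - a j)"
    by auto
  from Suc.IH[OF r d] obtain Q E where QE: "P = (\<Prod>i<n. [:- a i, 1:]) * Q + smult f E"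
    "degree Q = degree P - n" by blast
  define b where "b = a n"
  define Pi where "Pi = (\<Prod>i<n. [:- a i, 1:])"
  have "poly P b = poly Pi b * poly Q b + f * poly E b"
    using QE(1) unfolding Pi_def by simp
  moreover have "f dvd poly P b" using Suc.prems(1) b_def by simp
  ultimately have "f dvd poly Pi b * poly Q b"
    by (metis dvd_add_left_iff dvd_triv_left)
  moreover have "poly Pi b = (\<Prod>i<n. b - a i)" unfolding Pi_def by (simp add: poly_prod)
  moreover have "\<not> f dvd (\<Prod>i<n. b - a i)"
    using Suc.prems(2) pf unfolding b_def by (auto simp: prime_dvd_prod_iff)
  ultimately have "f dvd poly Q b" using pf by (simp add: prime_elem_dvd_mult_iff)
  then obtain t where t: "poly Q b = f * t" by blast
  define Q' where "Q' = synthetic_div Q b"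
  have "Q = [:-b, 1:] * Q' + [:poly Q b:]" unfolding Q'_def using synthetic_div_correct'[of b Q] by simp
  also have "[:poly Q b:] = smult f [:t:]" using t by simp
  finally have Qe: "Q = [:-b, 1:] * Q' + smult f [:t:]" .
  have "P = Pi * ([:-b, 1:] * Q' + smult f [:t:]) + smult f E" using QE(1) Qe unfolding Pi_def by simp
  also have "\<dots> = (Pi * [:-b, 1:]) * Q' + smult f (Pi * [:t:] + E)"
    by (simp only: distrib_left mult.assoc mult_smult_right smult_add_right add.assoc)
  finally have "P = (Pi * [:-b, 1:]) * Q' + smult f (Pi * [:t:] + E)" .
  moreover have "Pi * [:-b, 1:] = (\<Prod>i<Suc n. [:- a i, 1:])" unfolding Pi_def b_def by simp
  moreover have "degree Q' = degree P - Suc n" unfolding Q'_def using QE(2) by (simp add: degree_synthetic_div)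
  ultimately show ?case by metis
qed


lemma frob_dvd: "f dvd u - v \<Longrightarrow> f dvd u ^ (card (UNIV::'a set) ^ k) - v ^ (card (UNIV::'a set) ^ k)"
proof -
  assume h: "f dvd u - v"
  have "card (UNIV::'a set) ^ k > 0" using finite_UNIV_card_ge_0[where ?'a='a] by simp
  hence "u - v dvd (u - v) ^ (card (UNIV::'a set) ^ k)" by (simp add: dvd_power)
  thus ?thesis using h frob_diff[of u v k] by (metis dvd_trans)
qed

lemma poly_dvd_diff: "f dvd u - v \<Longrightarrow> f dvd poly P u - poly P v"
proof (induction P)
  case 0 thus ?case by simp
next
  case (pCons a P)
  have "poly (pCons a P) u - poly (pCons a P) v = u * (poly P u - poly P v) + (u - v) * poly P v"
    by (simp add: algebra_simps)
  thus ?case using pCons by (metis dvd_add dvd_mult dvd_mult2)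
qed

lemma al_period: "f dvd al (k + degree f) - al k"
proof -
  have "f dvd [:0,1:] ^ (card (UNIV::'a set) ^ degree f) - [:0,1:]" using fermat_K .
  hence "f dvd al (degree f) - al 0" by (simp add: al_def)
  from frob_dvd[OF this, of k] show ?thesis by (simp add: al_pow add.commute)
qed

lemma al_mod: "f dvd al i - al (i mod degree f)"
proof -
  have "f dvd al (k + degree f * t) - al k" for k t
  proof (induction t)
    case (Suc t)
    have "f dvd al (k + degree f * t + degree f) - al (k + degree f * t)" by (rule al_period)
    from dvd_add[OF this Suc] show ?case by (simp add: algebra_simps)
  qed simp
  from this[of "i mod degree f" "i div degree f"] show ?thesis by simp
qed

lemma al_root: "f dvd poly (lift f) (al j)"
proof -
  have "poly (lift f) (al j) = (poly (lift f) [:0,1:]) ^ (card (UNIV::'a set) ^ j)"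
    by (simp add: al_def poly_lift_frob)
  also have "\<dots> = f ^ (card (UNIV::'a set) ^ j)" by (simp add: poly_lift_x)
  finally show ?thesis using finite_UNIV_card_ge_0[where ?'a='a] by (simp add: dvd_power)
qed


lemma Pi_lin: "lead_coeff (\<Prod>i<n. [:- a i, 1:] :: 'b::idom poly) = 1 \<and> degree (\<Prod>i<n. [:- a i, 1:]) = n"
proof
  show "lead_coeff (\<Prod>i<n. [:- a i, 1:] :: 'b::idom poly) = 1" by (subst lead_coeff_prod) simp
  show "degree (\<Prod>i<n. [:- a i, 1:] :: 'b::idom poly) = n" by (simp add: degree_prod_eq_sum_degree)
qed

lemma roots_bound:
  fixes P :: "'a poly poly" and a :: "nat \<Rightarrow> 'a poly"
  assumes lc: "lead_coeff P = 1" and dn: "degree P < n"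
    and r: "\<forall>i<n. f dvd poly P (a i)"
    and d: "\<forall>i<n. \<forall>j<n. i \<noteq> j \<longrightarrow> \<not> f dvd (a i - a j)"
  shows False
proof -
  obtain Q E where QE: "P = (\<Prod>i<n. [:- a i, 1:]) * Q + smult f E" "degree Q = degree P - n"
    using factor_roots[OF r d] by blast
  define Pi where "Pi = (\<Prod>i<n. [:- a i, 1:])"
  have Pi: "lead_coeff Pi = 1" "degree Pi = n" unfolding Pi_def using Pi_lin by auto
  have "degree Q = 0" using QE(2) dn by simp
  then obtain q0 where q0: "Q = [:q0:]" by (metis degree_0_id)
  have c: "coeff P k = coeff Pi k * q0 + f * coeff E k" for k
    using QE(1) unfolding Pi_def q0 by simp
  have "coeff P n = 0" using dn by (simp add: coeff_eq_0)
  with c[of n] Pi have "q0 = - (f * coeff E n)" by (simp add: eq_neg_iff_add_eq_0)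
  hence "f dvd q0" by simp
  with c[of "degree P"] lc have "f dvd 1" by (metis dvd_add dvd_mult dvd_triv_left)
  thus False using pf irr by (simp add: irreducible_def)
qed

lemma al_dist_aux:
  assumes "i < j" "j < degree f" "f dvd al j - al i"
  shows False
proof -
  define d where "d = degree f"
  define q where "q = card (UNIV::'a set)"
  define m where "m = j - i"
  have m: "0 < m" "m < d" using assms unfolding m_def d_def by auto
  from frob_dvd[OF assms(3), of "d - i"] have "f dvd al (m + d) - al (0 + d)"
    using assms unfolding m_def d_def by (simp add: al_pow)
  moreover have "f dvd al (m + d) - al m" "f dvd al (0 + d) - al 0" unfolding d_def by (rule al_period)+
  ultimately have xm: "f dvd al m - [:0,1:]"
  proof -
    assume h: "f dvd al (m + d) - al (0 + d)" "f dvd al (m + d) - al m" "f dvd al (0 + d) - al 0"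
    have "al m - [:0,1:] = (al (0 + d) - al 0) + (al (m + d) - al (0 + d)) - (al (m + d) - al m)"
      by (simp add: al_0)
    thus ?thesis using h by (metis dvd_add dvd_diff)
  qed
  have roots: "f dvd g ^ (q ^ m) - g" for g
  proof -
    have "g ^ (q ^ m) = poly (lift g) (al m)"
      unfolding q_def al_def using poly_lift_frob[of g "[:0,1:]" m] by (simp add: poly_lift_x)
    moreover have "g = poly (lift g) [:0,1:]" by (simp add: poly_lift_x)
    ultimately show ?thesis using poly_dvd_diff[OF xm] by metis
  qed
  have q2: "q \<ge> 2" unfolding q_def
  proof -
    have "card {0::'a, 1} = 2" by simp
    moreover have "card {0::'a, 1} \<le> card (UNIV::'a set)" by (rule card_mono) auto
    ultimately show "2 \<le> card (UNIV::'a set)" by simp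
  qed
  have "q ^ 1 \<le> q ^ m" using m q2 by (intro power_increasing) auto
  hence qm: "q ^ m \<ge> 2" using q2 by simp
  define P :: "'a poly poly" where "P = monom 1 (q ^ m) + (- [:0,1:])"
  have dP: "degree P = q ^ m" and lP: "lead_coeff P = 1" unfolding P_def using qm m q2
    by (simp_all add: degree_add_eq_left lead_coeff_add_le degree_monom_eq coeff_pCons split: nat.split)
  have pP: "poly P g = g ^ (q ^ m) - g" for g unfolding P_def by (simp add: poly_monom)
  have "q ^ m + 1 \<le> q ^ d"
  proof -
    have "2 * q ^ m \<le> q * q ^ m" using q2 by (intro mult_right_mono) auto
    hence "q ^ m + 1 \<le> q * q ^ m" using qm by linarith
    also have "\<dots> = q ^ Suc m" by simp
    also have "\<dots> \<le> q ^ d" using m q2 by (intro power_increasing) auto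
    finally show ?thesis .
  qed
  hence "card {..<q ^ m + 1} \<le> card Rs" using card_Rs unfolding q_def d_def by simp
  then obtain a where a: "a ` {..<q ^ m + 1} \<subseteq> Rs" "inj_on a {..<q ^ m + 1}"
    using card_le_inj[OF _ finite_Rs] by blast
  show False
  proof (rule roots_bound[OF lP, of "q ^ m + 1" a])
    show "degree P < q ^ m + 1" using dP by simp
    show "\<forall>i<q ^ m + 1. f dvd poly P (a i)" using roots pP by simp
    show "\<forall>i<q ^ m + 1. \<forall>j<q ^ m + 1. i \<noteq> j \<longrightarrow> \<not> f dvd a i - a j"
    proof (intro allI impI notI)
      fix i j assume h: "i < q ^ m + 1" "j < q ^ m + 1" "i \<noteq> j" "f dvd a i - a j"
      have "a i \<in> Rs" "a j \<in> Rs" using a(1) h by auto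
      hence "degree (a i - a j) < degree f" unfolding Rs_def by (simp add: degree_diff_less)
      hence "a i - a j = 0" using small_dvd h(4) by blast
      thus False using a(2) h by (simp add: inj_on_def)
    qed
  qed
qed

lemma al_dist: "i < degree f \<Longrightarrow> j < degree f \<Longrightarrow> i \<noteq> j \<Longrightarrow> \<not> f dvd al i - al j"
  using al_dist_aux by (metis dvd_diff_commute nat_neq_iff)


lemma deriv_factor:
  "\<exists>Q0. f dvd Q0 - [:lead_coeff f:] \<and>
     f dvd pderiv f - Q0 * (\<Prod>i\<in>{1..<degree f}. [:0,1:] - al i)"
proof -
  define d where "d = degree f"
  have "\<forall>i<d. f dvd poly (lift f) (al i)" using al_root by blast
  moreover have "\<forall>i<d. \<forall>j<d. i \<noteq> j \<longrightarrow> \<not> f dvd al i - al j" using al_dist d_def by blast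
  ultimately obtain Q E where QE: "lift f = (\<Prod>i<d. [:- al i, 1:]) * Q + smult f E"
     "degree Q = degree (lift f) - d" using factor_roots by blast
  define Pi where "Pi = (\<Prod>i<d. [:- al i, 1:] :: 'a poly poly)"
  have Pi: "lead_coeff Pi = 1" "degree Pi = d" unfolding Pi_def using Pi_lin by auto
  have "degree Q = 0" using QE(2) by (simp add: degree_lift d_def)
  then obtain Q0 where Q0: "Q = [:Q0:]" by (metis degree_0_id)
  have L: "lift f = smult Q0 Pi + smult f E" using QE(1) unfolding Pi_def Q0 by (simp add: mult.commute)
  have "coeff (lift f) d = Q0 + f * coeff E d" using Pi by (simp add: L)
  hence "[:lead_coeff f:] = Q0 + f * coeff E d" by (simp add: coeff_lift d_def)
  hence c1: "f dvd Q0 - [:lead_coeff f:]" by (simp add: algebra_simps)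
  have "pderiv f = poly (pderiv (lift f)) [:0,1:]" by (simp add: pderiv_lift poly_lift_x)
  also have "\<dots> = Q0 * poly (pderiv Pi) [:0,1:] + f * poly (pderiv E) [:0,1:]"
    by (simp add: L pderiv_add pderiv_smult)
  also have "poly (pderiv Pi) [:0,1:] = (\<Prod>i\<in>{1..<d}. [:0,1:] - al i)"
  proof -
    have "poly (pderiv Pi) [:0,1:] = (\<Sum>k<d. \<Prod>i\<in>{..<d}-{k}. [:0,1:] - al i)"
      unfolding Pi_def pderiv_prod by (simp add: poly_sum poly_prod pderiv_pCons)
    also have "\<dots> = (\<Prod>i\<in>{..<d}-{0}. [:0,1:] - al i) + (\<Sum>k\<in>{..<d}-{0}. \<Prod>i\<in>{..<d}-{k}. [:0,1:] - al i)"
      using degf d_def by (subst sum.remove[of _ 0]) auto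
    also have "(\<Sum>k\<in>{..<d}-{0}. \<Prod>i\<in>{..<d}-{k}. [:0,1:] - al i) = 0"
    proof (rule sum.neutral, rule ballI)
      fix k assume "k \<in> {..<d}-{0}"
      hence "0 \<in> {..<d}-{k}" by auto
      thus "(\<Prod>i\<in>{..<d}-{k}. [:0,1:] - al i) = 0" by (intro prod_zero) (auto simp: al_0 intro!: bexI[of _ 0])
    qed
    also have "{..<d}-{0} = {1..<d}" by auto
    finally show ?thesis by simp
  qed
  finally have "pderiv f - Q0 * (\<Prod>i\<in>{1..<d}. [:0,1:] - al i) = f * poly (pderiv E) [:0,1:]" by simp
  thus ?thesis using c1 unfolding d_def by (intro exI[of _ Q0]) auto
qed

end



lemma geom_nat: "(q::nat) \<ge> 1 \<Longrightarrow> (q - 1) * (\<Sum>k<d. q ^ k) = q ^ d - 1"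
proof (induction d)
  case (Suc d)
  have "(q - 1) * (\<Sum>k<Suc d. q ^ k) = (q ^ d - 1) + (q - 1) * q ^ d"
    using Suc by (simp add: distrib_left)
  also have "\<dots> = q ^ Suc d - 1" using Suc(2)
    by (simp add: algebra_simps)
  finally show ?case .
qed simp

context
  fixes f :: "'a::{field,finite} poly"
  assumes irr: "irreducible f"
begin

lemma key:
  assumes q4: "4 dvd (card (UNIV :: 'a set) - 1)" and ev: "even (degree f)"
  shows "f dvd (pderiv f) ^ ((card (UNIV :: 'a set) ^ degree f - 1) div 2) + 1"
proof -
  define q where "q = card (UNIV :: 'a set)"
  define d where "d = degree f"
  define A :: "nat \<Rightarrow> 'a poly" where "A i = al (i mod d)" for i
  define c where "c = lead_coeff f"
  define h where "h = (q - 1) div 2"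
  define S where "S = (\<Sum>k<d. q ^ k)"
  have d0: "d > 0" unfolding d_def using degf[OF irr] .
  have q1: "q \<ge> 1" unfolding q_def using finite_UNIV_card_ge_0[where ?'a='a] by simp
  have hq: "2 * h = q - 1" using q4 unfolding h_def q_def by auto
  have he: "even h" using q4 unfolding h_def q_def by auto
  have congA: "[al i = A i] (mod f)" for i
    unfolding A_def d_def using al_mod[OF irr] by (simp add: cong_iff_dvd_diff)
  have Aper: "A i = A (i mod d)" for i unfolding A_def by simp
  obtain Q0 where Q0: "f dvd Q0 - [:c:]" "f dvd pderiv f - Q0 * (\<Prod>i\<in>{1..<d}. [:0,1:] - al i)"
    using deriv_factor[OF irr] unfolding c_def d_def by blast
  have b1: "[pderiv f = [:c:] * (\<Prod>i\<in>{1..<d}. [:0,1:] - al i)] (mod f)"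
  proof -
    have "[pderiv f = Q0 * (\<Prod>i\<in>{1..<d}. [:0,1:] - al i)] (mod f)"
      using Q0(2) by (simp add: cong_iff_dvd_diff)
    also have "[Q0 * (\<Prod>i\<in>{1..<d}. [:0,1:] - al i) = [:c:] * (\<Prod>i\<in>{1..<d}. [:0,1:] - al i)] (mod f)"
      using Q0(1) by (intro cong_mult) (simp_all add: cong_iff_dvd_diff)
    finally show ?thesis .
  qed
  have N1: "[pderiv f ^ (q ^ k) = [:c:] * (\<Prod>i\<in>{1..<d}. A k - A (i + k))] (mod f)" for k
  proof -
    have "[pderiv f ^ (q ^ k) = ([:c:] * (\<Prod>i\<in>{1..<d}. [:0,1:] - al i)) ^ (q ^ k)] (mod f)"
      using frob_dvd[OF irr, of "pderiv f" "[:c:] * (\<Prod>i\<in>{1..<d}. [:0,1:] - al i)" k] b1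
      unfolding q_def by (simp add: cong_iff_dvd_diff)
    also have "([:c:] * (\<Prod>i\<in>{1..<d}. [:0,1:] - al i)) ^ (q ^ k) = [:c:] * (\<Prod>i\<in>{1..<d}. al k - al (i + k))"
    proof -
      have "([:0,1:] - al i :: 'a poly) ^ (q ^ k) = al k - al (i + k)" for i
        unfolding q_def using frob_diff[of "al 0 :: 'a poly" "al i" k] al_pow[of 0 k, where 'a='a] al_pow[of i k, where 'a='a] by (simp add: al_0)
      thus ?thesis unfolding q_def by (simp only: power_mult_distrib prod_power_distrib frob_const)
    qed
    also have "[[:c:] * (\<Prod>i\<in>{1..<d}. al k - al (i + k)) = [:c:] * (\<Prod>i\<in>{1..<d}. A k - A (i + k))] (mod f)"
      by (intro cong_mult cong_refl cong_prod cong_diff congA)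
    finally show ?thesis .
  qed
  define T where "T i j = A i - A j" for i j
  define Pi2 where "Pi2 = (\<Prod>k<d. \<Prod>i\<in>{1..<d}. A k - A (i + k))"
  define \<delta> where "\<delta> = (\<Prod>j<d. \<Prod>i<j. T i j)"
  have N2: "[pderiv f ^ S = [:c:] ^ d * Pi2] (mod f)"
  proof -
    have "pderiv f ^ S = (\<Prod>k<d. pderiv f ^ (q ^ k))" unfolding S_def by (rule power_sum)
    also have "[\<dots> = (\<Prod>k<d. [:c:] * (\<Prod>i\<in>{1..<d}. A k - A (i + k)))] (mod f)"
      by (intro cong_prod N1)
    also have "(\<Prod>k<d. [:c:] * (\<Prod>i\<in>{1..<d}. A k - A (i + k))) = [:c:] ^ d * Pi2"
      unfolding Pi2_def by (simp only: prod.distrib prod_constant card_lessThan)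
    finally show ?thesis .
  qed
  have N3: "Pi2 = (\<Prod>j<d. \<Prod>i<j. T i j * T j i)"
  proof -
    have "Pi2 = (\<Prod>k<d. \<Prod>j\<in>{..<d}-{k}. T k j)"
      unfolding Pi2_def
    proof (rule prod.cong[OF refl])
      fix k assume "k \<in> {..<d}"
      thus "(\<Prod>i\<in>{1..<d}. A k - A (i + k)) = (\<Prod>j\<in>{..<d}-{k}. T k j)"
        using alg_rot[of T d k] Aper unfolding T_def by (metis lessThan_iff)
    qed
    also have "\<dots> = (\<Prod>j<d. \<Prod>i<j. T i j * T j i)" by (rule alg_offdiag)
    finally show ?thesis .
  qed
  have N4: "Pi2 ^ h = \<delta> ^ (q - 1)"
  proof -
    have "Pi2 ^ h = (\<Prod>j<d. \<Prod>i<j. (T i j * T j i) ^ h)" unfolding N3 by (simp add: prod_power_distrib)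
    also have "\<dots> = (\<Prod>j<d. \<Prod>i<j. T i j ^ (q - 1))"
    proof (intro prod.cong refl)
      fix i j
      have "T i j * T j i = - (T i j ^ 2)" unfolding T_def by (simp add: power2_eq_square algebra_simps)
      hence "(T i j * T j i) ^ h = (T i j ^ 2) ^ h" using he by simp
      thus "(T i j * T j i) ^ h = T i j ^ (q - 1)" by (simp add: power_mult[symmetric] hq)
    qed
    also have "\<dots> = \<delta> ^ (q - 1)" unfolding \<delta>_def by (simp add: prod_power_distrib)
    finally show ?thesis .
  qed
  have N5: "[\<delta> ^ q = - \<delta>] (mod f)"
  proof -
    have "\<delta> ^ q = (\<Prod>j<d. \<Prod>i<j. A i ^ q - A j ^ q)"
      unfolding \<delta>_def T_def q_def using frob_diff[where 'a='a and k=1] by (simp add: prod_power_distrib)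
    also have "[\<dots> = (\<Prod>j<d. \<Prod>i<j. A (Suc i) - A (Suc j))] (mod f)"
    proof -
      have "[A i ^ q = A (Suc i)] (mod f)" for i
      proof -
        have "A i ^ q = al (i mod d + 1)" unfolding A_def q_def using al_pow[of "i mod d" 1] by simp
        also have "[al (i mod d + 1) = A (i mod d + 1)] (mod f)" by (rule congA)
        also have "A (i mod d + 1) = A (Suc i)" unfolding A_def by (simp add: mod_Suc_eq)
        finally show ?thesis .
      qed
      thus ?thesis by (intro cong_prod cong_diff) auto
    qed
    also have "(\<Prod>j<d. \<Prod>i<j. A (Suc i) - A (Suc j)) = - \<delta>"
      unfolding \<delta>_def T_def using alg_shift[of A d] Aper ev d0 unfolding d_def by auto
    finally show ?thesis .
  qed
  have nd: "\<not> f dvd \<delta>"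
  proof
    assume "f dvd \<delta>"
    then obtain j i where "j < d" "i < j" "f dvd T i j" unfolding \<delta>_def
      using pf[OF irr] by (auto simp: prime_dvd_prod_iff)
    moreover have "T i j = al i - al j" using \<open>j < d\<close> \<open>i < j\<close> unfolding T_def A_def by simp
    ultimately show False using al_dist[OF irr, of i j] d_def by auto
  qed
  have N5': "f dvd \<delta> ^ (q - 1) + 1"
  proof -
    have "\<delta> ^ q = \<delta> ^ Suc (q - 1)" using q1 by simp
    hence "\<delta> ^ q = \<delta> * \<delta> ^ (q - 1)" by (simp only: power_Suc)
    hence "f dvd \<delta> * (\<delta> ^ (q - 1) + 1)" using N5 by (simp add: cong_iff_dvd_diff algebra_simps)
    thus ?thesis using nd pf[OF irr] by (simp add: prime_elem_dvd_mult_iff)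
  qed
  have N6: "c ^ (d * h) = 1"
  proof -
    have "c \<noteq> 0" unfolding c_def using f_nz[OF irr] by simp
    moreover have "c ^ Suc (q - 1) = c" using ff_pow_card[of c] q1 unfolding q_def by simp
    hence "c * c ^ (q - 1) = c * 1" by (simp only: power_Suc mult_1_right)
    ultimately have "c ^ (q - 1) = 1" by simp
    moreover have "d * h = (q - 1) * (d div 2)"
    proof -
      obtain e where e: "d = 2 * e" using ev unfolding d_def by blast
      hence "d * h = e * (2 * h)" by simp
      thus ?thesis using e hq by simp
    qed
    ultimately show ?thesis by (simp add: power_mult)
  qed
  have E: "(q ^ d - 1) div 2 = S * h"
  proof -
    have "q ^ d - 1 = (2 * h) * S" using geom_nat[OF q1, of d] hq unfolding S_def by simp
    thus ?thesis by simp
  qed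
  have "pderiv f ^ ((q ^ d - 1) div 2) = (pderiv f ^ S) ^ h" unfolding E by (simp only: power_mult)
  also have "[\<dots> = ([:c:] ^ d * Pi2) ^ h] (mod f)" by (intro cong_pow N2)
  also have "([:c:] ^ d * Pi2) ^ h = [:c ^ (d * h):] * \<delta> ^ (q - 1)"
    by (simp only: power_mult_distrib N4 poly_const_pow power_mult)
  also have "\<dots> = \<delta> ^ (q - 1)" by (simp add: N6)
  finally have "f dvd pderiv f ^ ((q ^ d - 1) div 2) - \<delta> ^ (q - 1)" by (simp add: cong_iff_dvd_diff)
  from dvd_add[OF this N5'] show ?thesis unfolding q_def d_def by simp
qed

end



theorem lemma5p1:
  fixes f :: "'a::{field,finite} poly"
  assumes "4 dvd (card (UNIV :: 'a set) - 1)"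
    and "irreducible f"
    and "even (degree f)"
  shows "quad_nonresidue_mod f (pderiv f)"
  unfolding quad_nonresidue_mod_def
proof
  assume "\<exists>x. x ^ 2 mod f = pderiv f mod f"
  then obtain y where y: "y ^ 2 mod f = pderiv f mod f" by blast
  define q where "q = card (UNIV :: 'a set)"
  define d where "d = degree f"
  define E where "E = (q ^ d - 1) div 2"
  have irr: "irreducible f" by fact
  have d0: "d > 0" using degf[OF irr] d_def by simp
  have q1: "q \<ge> 1" unfolding q_def using finite_UNIV_card_ge_0[where ?'a='a] by simp
  have q2: "q \<ge> 2"
  proof -
    have "card {0::'a, 1} = 2" by simp
    moreover have "card {0::'a, 1} \<le> card (UNIV::'a set)" by (rule card_mono) auto
    ultimately show ?thesis unfolding q_def by simp
  qed
  have q5: "q \<ge> 5"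
  proof -
    obtain k where k: "q - 1 = 4 * k" using assms(1) unfolding q_def by blast
    have "k \<noteq> 0" using k q2 by auto
    thus ?thesis using k q2 by linarith
  qed
  have qodd: "odd q"
  proof -
    obtain k where k: "q - 1 = 4 * k" using assms(1) unfolding q_def by blast
    hence "q = 2 * (2 * k) + 1" using q1 by linarith
    thus ?thesis by simp
  qed
  have "q ^ d \<ge> q ^ 1" using q1 d0 by (intro power_increasing) auto
  hence qd: "q ^ d \<ge> 5" using q5 by simp
  have E1: "E > 0" unfolding E_def using qd by simp
  have E2: "q ^ d - 1 = 2 * E" unfolding E_def using qodd by (simp add: odd_pos)
  have key1: "f dvd pderiv f ^ E + 1" using key[OF irr assms(1) assms(3)] unfolding E_def q_def d_def .
  have ys: "f dvd y ^ 2 - pderiv f" using y by (simp add: mod_eq_dvd_iff)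
  have pf1: "prime_elem f" using pf[OF irr] .
  have nu: "\<not> f dvd 1" using pf1 prime_elem_not_unit by blast
  show False
  proof (cases "f dvd y")
    case True
    hence "f dvd y ^ 2" by (simp add: power2_eq_square)
    have "pderiv f = y ^ 2 - (y ^ 2 - pderiv f)" by simp
    hence "f dvd pderiv f" using ys \<open>f dvd y ^ 2\<close> by (metis dvd_diff)
    moreover have "pderiv f dvd pderiv f ^ E" using E1 by (simp add: dvd_power)
    ultimately have "f dvd pderiv f ^ E" by (rule dvd_trans)
    thus False using key1 nu by (simp add: dvd_add_right_iff)
  next
    case False
    have f1: "f dvd y ^ (q ^ d - 1) - 1" using fermat_K1[OF irr False] unfolding q_def d_def .
    have "y ^ (q ^ d - 1) = (y ^ 2) ^ E" using E2 by (simp add: power_mult)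
    have f2: "f dvd (y ^ 2) ^ E - pderiv f ^ E"
      using ys cong_pow[of "y^2" "pderiv f" f E] by (simp add: cong_iff_dvd_diff)
    from dvd_diff[OF f1 f2] have "f dvd (y ^ (q ^ d - 1) - 1) - ((y ^ 2) ^ E - pderiv f ^ E)" .
    moreover have "(y ^ (q ^ d - 1) - 1) - ((y ^ 2) ^ E - pderiv f ^ E) = pderiv f ^ E - 1"
      using \<open>y ^ (q ^ d - 1) = (y ^ 2) ^ E\<close> by simp
    ultimately have "f dvd (pderiv f ^ E - 1)" by simp
    from dvd_diff[OF key1 this] have "f dvd 2" by simp
    have two: "(2::'a) = 0"
    proof (rule ccontr)
      assume "(2::'a) \<noteq> 0"
      have "(2::'a poly) = [:2:]" by (simp add: numeral_poly)
      have "[:2::'a:] * [:inverse 2:] = [:2 * inverse 2:]" by simp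
      also have "\<dots> = 1" using \<open>(2::'a) \<noteq> 0\<close> by (simp add: one_pCons)
      finally have "[:2::'a:] dvd 1" by (metis dvd_triv_left)
      hence "is_unit (2 :: 'a poly)" using \<open>(2::'a poly) = [:2:]\<close> by simp
      hence "f dvd 1" using \<open>f dvd 2\<close> by (rule dvd_trans[rotated])
      thus False using nu by simp
    qed
    have "CHAR('a) dvd 2" using two of_nat_eq_0_iff_char_dvd[of 2, where 'a='a] by simp
    moreover have "prime CHAR('a)" by (rule char_prime_ff)
    ultimately have c2: "CHAR('a) = 2"
    proof -
      have "CHAR('a) \<le> 2" using \<open>CHAR('a) dvd 2\<close> by (rule dvd_imp_le) simp
      moreover have "CHAR('a) \<ge> 2" using \<open>prime CHAR('a)\<close> by (rule prime_ge_2_nat)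
      ultimately show ?thesis by simp
    qed
    obtain n where "q = CHAR('a) ^ n" using card_ff_prime_power unfolding q_def by blast
    with c2 q2 have "even q" by (cases n) auto
    thus False using qodd by simp
  qed
qed


end
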